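(* Let $A$ be a real symmetric matrix of tropical rank two. Then the symmetric tropical rank of $A$ is greater than two if and only if some principal $3\times 3$ submatrix of $A$ is not symmetrically tropically singular.
   Context: For an $r\times r$ submatrix of a real matrix $A$ with row index set $I$ and column index set $J$, each bijection $\rho:I\to J$ has value $\sum_{i\in I}A_{i,\rho(i)}$; the submatrix is tropically singular if the minimum value is attained by at least two distinct bijections. For symmetric $A$, the submatrix is symmetrically tropically singular if the minimum is attained by at least two distinct monomials $\prod_{i\in I}X_{i,\rho(i)}$, where variables are subject to the identification $X_{i,j}=X_{j,i}$. The tropical rank (resp. symmetric tropical rank) of $A$ is the largest $r$ such that $A$ has an $r\times r$ submatrix (arbitrary row and column sets) that is not tropically singular (resp. not symmetrically tropically singular). A principal submatrix is one with equal row and column index sets. *)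

theory Defs
  imports Complex_Main "HOL-Library.Multiset"
begin

text \<open>An n x n real matrix is a function A :: nat => nat => real, with indices
  ranging over {..<n}.  A submatrix is given by row index set I and column index set J.\<close>

definition bij_value :: "(nat \<Rightarrow> nat \<Rightarrow> real) \<Rightarrow> nat set \<Rightarrow> (nat \<Rightarrow> nat) \<Rightarrow> real" where
  "bij_value A I \<rho> = (\<Sum>i\<in>I. A i (\<rho> i))"

definition is_min_bij :: "(nat \<Rightarrow> nat \<Rightarrow> real) \<Rightarrow> nat set \<Rightarrow> nat set \<Rightarrow> (nat \<Rightarrow> nat) \<Rightarrow> bool" where
  "is_min_bij A I J \<rho> \<longleftrightarrow> bij_betw \<rho> I J \<and>
     (\<forall>\<sigma>. bij_betw \<sigma> I J \<longrightarrow> bij_value A I \<rho> \<le> bij_value A I \<sigma>)"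

definition trop_singular :: "(nat \<Rightarrow> nat \<Rightarrow> real) \<Rightarrow> nat set \<Rightarrow> nat set \<Rightarrow> bool" where
  "trop_singular A I J \<longleftrightarrow> (\<exists>\<rho>1 \<rho>2. is_min_bij A I J \<rho>1 \<and> is_min_bij A I J \<rho>2 \<and>
       (\<exists>i\<in>I. \<rho>1 i \<noteq> \<rho>2 i))"

text \<open>The monomial prod_{i in I} X_{i, rho i}, with X_{i,j} = X_{j,i}: a multiset of
  unordered pairs {i, rho i}.\<close>
definition sym_monomial :: "nat set \<Rightarrow> (nat \<Rightarrow> nat) \<Rightarrow> nat set multiset" where
  "sym_monomial I \<rho> = image_mset (\<lambda>i. {i, \<rho> i}) (mset_set I)"

definition sym_trop_singular :: "(nat \<Rightarrow> nat \<Rightarrow> real) \<Rightarrow> nat set \<Rightarrow> nat set \<Rightarrow> bool" where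
  "sym_trop_singular A I J \<longleftrightarrow> (\<exists>\<rho>1 \<rho>2. is_min_bij A I J \<rho>1 \<and> is_min_bij A I J \<rho>2 \<and>
       sym_monomial I \<rho>1 \<noteq> sym_monomial I \<rho>2)"

definition symmetric_mat :: "nat \<Rightarrow> (nat \<Rightarrow> nat \<Rightarrow> real) \<Rightarrow> bool" where
  "symmetric_mat n A \<longleftrightarrow> (\<forall>i<n. \<forall>j<n. A i j = A j i)"

definition trop_rank :: "nat \<Rightarrow> (nat \<Rightarrow> nat \<Rightarrow> real) \<Rightarrow> nat" where
  "trop_rank n A = Max {r. \<exists>I J. I \<subseteq> {..<n} \<and> J \<subseteq> {..<n} \<and> card I = r \<and> card J = r \<and>
       \<not> trop_singular A I J}"

definition sym_trop_rank :: "nat \<Rightarrow> (nat \<Rightarrow> nat \<Rightarrow> real) \<Rightarrow> nat" where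
  "sym_trop_rank n A = Max {r. \<exists>I J. I \<subseteq> {..<n} \<and> J \<subseteq> {..<n} \<and> card I = r \<and> card J = r \<and>
       \<not> sym_trop_singular A I J}"

end

theory Submission
  imports Defs
begin

lemma key0:
  assumes "bij_betw f I J" "bij_betw g I J" "sym_monomial I f = sym_monomial I g"
    "finite I" "x \<in> I" "f x \<noteq> g x"
  shows "f x \<in> I \<and> g (f x) = x \<and> f x \<noteq> x"
proof -
  have "{x, f x} \<in># sym_monomial I f"
    using assms(4,5) by (simp add: sym_monomial_def)
  then have "{x, f x} \<in># sym_monomial I g" using assms(3) by simp
  then obtain y where y: "y \<in> I" "{y, g y} = {x, f x}"
    using assms(4) by (auto simp: sym_monomial_def)
  have "y \<noteq> x"
  proof
    assume "y = x"
    with y(2) have "{x, g x} = {x, f x}" by simp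
    then have "g x = f x" by (metis doubleton_eq_iff insert_absorb2)
    with assms(6) show False by simp
  qed
  with y(2) have "y = f x" "g y = x" by (auto simp: doubleton_eq_iff)
  with y(1) \<open>y \<noteq> x\<close> show ?thesis by auto
qed

lemma key:
  assumes "bij_betw f I J" "bij_betw g I J" "sym_monomial I f = sym_monomial I g"
    "finite I" "x \<in> I" "f x \<noteq> g x"
  shows "f x \<in> I \<and> g (f x) = x \<and> f x \<noteq> x \<and> f (f x) \<noteq> g (f x) \<and>
         g x \<in> I \<and> f (g x) = x \<and> g x \<noteq> x"
proof -
  have a: "f x \<in> I \<and> g (f x) = x \<and> f x \<noteq> x" using key0[OF assms] .
  have b: "g x \<in> I \<and> f (g x) = x \<and> g x \<noteq> x"
    using key0[OF assms(2,1) assms(3)[symmetric] assms(4,5) assms(6)[symmetric]] .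
  have "f (f x) \<noteq> g (f x)"
  proof
    assume "f (f x) = g (f x)"
    with a b have "f (f x) = f (g x)" by simp
    moreover have "inj_on f I" using assms(1) bij_betw_def by blast
    ultimately have "f x = g x" using a b by (meson inj_on_def)
    with assms(6) show False by simp
  qed
  with a b show ?thesis by simp
qed

lemma splice:
  assumes "bij_betw f I J" "bij_betw t R S" "R \<subseteq> I" "f ` R = S"
  shows "bij_betw (\<lambda>x. if x \<in> R then t x else f x) I J"
proof -
  have inj: "inj_on f I" and im: "f ` I = J" using assms(1) by (auto simp: bij_betw_def)
  have "bij_betw f (I - R) (J - S)"
    unfolding bij_betw_def
  proof
    show "inj_on f (I - R)" using inj inj_on_subset by blast
    show "f ` (I - R) = J - S" using inj im assms(3,4) by (simp add: inj_on_image_set_diff[of f I I R])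
  qed
  then have "bij_betw (\<lambda>x. if x \<in> R then t x else f x) (R \<union> (I - R)) (S \<union> (J - S))"
    by (rule bij_betw_disjoint_Un[OF assms(2)]) auto
  moreover have "R \<union> (I - R) = I" using assms(3) by auto
  moreover have "S \<subseteq> J" using assms(3,4) im by auto
  then have "S \<union> (J - S) = J" by auto
  ultimately show ?thesis by simp
qed

lemma value_split:
  assumes "finite I" "R \<subseteq> I"
  shows "bij_value A I h = bij_value A R h + bij_value A (I - R) h"
  unfolding bij_value_def using assms
  by (metis add.commute sum.subset_diff)

lemma value_splice:
  assumes "finite I" "R \<subseteq> I"
  shows "bij_value A I (\<lambda>x. if x \<in> R then t x else f x) = bij_value A R t + bij_value A (I - R) f"
  using value_split[OF assms, of A "\<lambda>x. if x \<in> R then t x else f x"]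
  unfolding bij_value_def by simp

lemma mono_splice:
  assumes "finite I" "R \<subseteq> I"
  shows "sym_monomial I (\<lambda>x. if x \<in> R then t x else f x) = sym_monomial R t + sym_monomial (I - R) f"
proof -
  have fR: "finite R" using assms finite_subset by blast
  have "I = R \<union> (I - R)" using assms(2) by auto
  then have "mset_set I = mset_set R + mset_set (I - R)"
    using mset_set_Union[of R "I - R"] fR assms(1) by auto
  then have "sym_monomial I (\<lambda>x. if x \<in> R then t x else f x)
     = image_mset (\<lambda>i. {i, (if i \<in> R then t i else f i)}) (mset_set R)
     + image_mset (\<lambda>i. {i, (if i \<in> R then t i else f i)}) (mset_set (I - R))"
    unfolding sym_monomial_def by simp
  also have "image_mset (\<lambda>i. {i, (if i \<in> R then t i else f i)}) (mset_set R) = sym_monomial R t"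
    unfolding sym_monomial_def by (rule image_mset_cong) (simp add: fR)
  also have "image_mset (\<lambda>i. {i, (if i \<in> R then t i else f i)}) (mset_set (I - R)) = sym_monomial (I - R) f"
    unfolding sym_monomial_def by (rule image_mset_cong) (simp add: assms(1))
  finally show ?thesis .
qed


lemma min_same:
  assumes "\<not> sym_trop_singular A I J" "is_min_bij A I J p" "is_min_bij A I J q"
  shows "sym_monomial I p = sym_monomial I q"
  using assms unfolding sym_trop_singular_def by blast

lemma bij_restrict:
  assumes "bij_betw f I J" "R \<subseteq> I" "f ` R = S"
  shows "bij_betw f R S"
  using assms unfolding bij_betw_def by (meson inj_on_subset)

lemma splice_min:
  assumes "is_min_bij A I J f" "bij_betw t R S" "R \<subseteq> I" "f ` R = S" "finite I"
    "bij_value A R t \<le> bij_value A R f"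
  shows "is_min_bij A I J (\<lambda>x. if x \<in> R then t x else f x)"
proof -
  have bf: "bij_betw f I J" using assms(1) is_min_bij_def by blast
  have "bij_value A I (\<lambda>x. if x \<in> R then t x else f x) \<le> bij_value A I f"
    using value_splice[OF assms(5,3)] value_split[OF assms(5,3), of A f] assms(6) by simp
  then show ?thesis using assms(1) splice[OF bf assms(2,3,4)] unfolding is_min_bij_def
    by force
qed

lemma core:
  assumes fin: "finite I" and IJ: "I \<subseteq> {..<n}" "J \<subseteq> {..<n}"
    and ns: "\<not> sym_trop_singular A I J"
    and r3: "\<And>R S. R \<subseteq> {..<n} \<Longrightarrow> S \<subseteq> {..<n} \<Longrightarrow> card R = 3 \<Longrightarrow> card S = 3 \<Longrightarrow> trop_singular A R S"
    and mf: "is_min_bij A I J f" and mg: "is_min_bij A I J g"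
    and i: "i \<in> I" "f i \<noteq> g i"
  shows "\<exists>R. R \<subseteq> {..<n} \<and> card R = 3 \<and> \<not> sym_trop_singular A R R"
proof -
  have bf: "bij_betw f I J" and bg: "bij_betw g I J" using mf mg is_min_bij_def by blast+
  have mfg: "sym_monomial I f = sym_monomial I g" using min_same[OF ns mf mg] .
  define j where "j = f i"
  define k where "k = g i"
  define l where "l = f j"
  note K1 = key[OF bf bg mfg fin i]
  have j: "j \<in> I" "g j = i" "j \<noteq> i" "f j \<noteq> g j" "k \<in> I" "f k = i" "k \<noteq> i" "j \<noteq> k"
    using K1 i unfolding j_def k_def by auto
  note K2 = key[OF bf bg mfg fin j(1) j(4)]
  have l: "l \<in> I" "l \<noteq> j" "l \<noteq> i" using K2 j unfolding l_def by auto
  have inJ: "i \<in> J" "j \<in> J" "k \<in> J" "l \<in> J"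
    using bf bg j l i unfolding j_def k_def l_def bij_betw_def by (metis imageI)+
  define R where "R = {k, i, j}"
  have R: "R \<subseteq> I" "card R = 3" "R \<subseteq> {..<n}" using j i IJ unfolding R_def by auto
  have fR: "f ` R = {i, j, l}" unfolding R_def using j unfolding j_def l_def by auto
  show ?thesis
  proof (cases "l = k")
    case True
    have fRR: "f ` R = R" using fR True unfolding R_def by auto
    have bR: "bij_betw f R R" using bij_restrict[OF bf R(1) fRR] .
    have "\<not> sym_trop_singular A R R"
    proof
      assume "sym_trop_singular A R R"
      then obtain s1 s2 where s: "is_min_bij A R R s1" "is_min_bij A R R s2"
        "sym_monomial R s1 \<noteq> sym_monomial R s2" unfolding sym_trop_singular_def by blast
      have m1: "is_min_bij A I J (\<lambda>x. if x \<in> R then s1 x else f x)"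
        using s(1) bR by (intro splice_min[OF mf _ R(1) fRR fin]) (auto simp: is_min_bij_def)
      have m2: "is_min_bij A I J (\<lambda>x. if x \<in> R then s2 x else f x)"
        using s(2) bR by (intro splice_min[OF mf _ R(1) fRR fin]) (auto simp: is_min_bij_def)
      have "sym_monomial I (\<lambda>x. if x \<in> R then s1 x else f x) = sym_monomial I (\<lambda>x. if x \<in> R then s2 x else f x)"
        using min_same[OF ns m1 mf] min_same[OF ns m2 mf] by simp
      then have "sym_monomial R s1 = sym_monomial R s2"
        using mono_splice[OF fin R(1)] by simp
      with s(3) show False by simp
    qed
    with R show ?thesis by blast
  next
    case False
    define S where "S = {i, j, l}"
    have S: "card S = 3" "S \<subseteq> {..<n}" using j l False inJ IJ unfolding S_def by auto
    have bR: "bij_betw f R S" using bij_restrict[OF bf R(1) fR] unfolding S_def .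
    have "trop_singular A R S" using r3[OF R(3) S(2) R(2) S(1)] .
    then obtain t1 t2 y where t: "is_min_bij A R S t1" "is_min_bij A R S t2" "y \<in> R" "t1 y \<noteq> t2 y"
      unfolding trop_singular_def by blast
    obtain t where t': "is_min_bij A R S t" "t y \<noteq> f y"
      using t by metis
    define p where "p = (\<lambda>x. if x \<in> R then t x else f x)"
    have mp: "is_min_bij A I J p" unfolding p_def
      using t'(1) bR by (intro splice_min[OF mf _ R(1) _ fin]) (auto simp: is_min_bij_def fR S_def)
    have bp: "bij_betw p I J" using mp is_min_bij_def by blast
    have mfp: "sym_monomial I f = sym_monomial I p" using min_same[OF ns mf mp] .
    have step: "z \<in> I \<Longrightarrow> f z \<noteq> p z \<Longrightarrow> f z \<in> I \<and> f (f z) \<noteq> p (f z)" for z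
      using key[OF bf bp mfp fin] by blast
    have inR: "z \<in> I \<Longrightarrow> f z \<noteq> p z \<Longrightarrow> z \<in> R" for z
      unfolding p_def by (cases "z \<in> R") auto
    have fy: "f y \<noteq> p y" using t'(2) t(3) unfolding p_def by simp
    have yI: "y \<in> I" using t(3) R(1) by blast
    have "f j \<noteq> p j"
    proof -
      have "f i \<noteq> p i"
      proof -
        have "y = k \<or> y = i \<or> y = j" using t(3) unfolding R_def by auto
        then show ?thesis
        proof (elim disjE)
          assume "y = k" then show ?thesis using step[OF yI fy] j by simp
        next
          assume "y = i" then show ?thesis using fy by simp
        next
          assume "y = j"
          then have "f l \<noteq> p l" "l \<in> I" using step[OF yI fy] unfolding l_def by auto
          then have "l \<in> R" using inR by blast
          then show ?thesis using False l unfolding R_def by auto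
        qed
      qed
      then show ?thesis using step[OF i(1)] unfolding j_def by blast
    qed
    then have "l \<in> R" using step[OF j(1)] inR unfolding l_def by blast
    then have False using False l unfolding R_def by auto
    then show ?thesis by blast
  qed
qed


lemma card_le_n: "I \<subseteq> {..<n} \<Longrightarrow> card I \<le> (n::nat)"
  by (metis card_lessThan card_mono finite_lessThan)

lemma rank_sing:
  assumes "trop_rank n A = 2" "I \<subseteq> {..<n}" "J \<subseteq> {..<n}" "card I = card J" "card I > 2"
  shows "trop_singular A I J"
proof (rule ccontr)
  assume ns: "\<not> trop_singular A I J"
  let ?S = "{r. \<exists>I J. I \<subseteq> {..<n} \<and> J \<subseteq> {..<n} \<and> card I = r \<and> card J = r \<and>
       \<not> trop_singular A I J}"
  have fin: "finite ?S" by (rule finite_subset[of _ "{..n}"]) (auto dest: card_le_n)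
  have "card I \<in> ?S" using assms ns by auto
  then have "card I \<le> Max ?S" using fin by simp
  with assms show False unfolding trop_rank_def by simp
qed

theorem proposition3:
  fixes n :: nat and A :: "nat \<Rightarrow> nat \<Rightarrow> real"
  assumes "symmetric_mat n A"
    and "trop_rank n A = 2"
  shows "sym_trop_rank n A > 2 \<longleftrightarrow>
    (\<exists>I. I \<subseteq> {..<n} \<and> card I = 3 \<and> \<not> sym_trop_singular A I I)"
proof -
  let ?S = "{r. \<exists>I J. I \<subseteq> {..<n} \<and> J \<subseteq> {..<n} \<and> card I = r \<and> card J = r \<and>
       \<not> sym_trop_singular A I J}"
  have fin: "finite ?S" by (rule finite_subset[of _ "{..n}"]) (auto dest: card_le_n)
  have r: "sym_trop_rank n A = Max ?S" unfolding sym_trop_rank_def by simp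
  show ?thesis
  proof
    assume "sym_trop_rank n A > 2"
    have "\<not> sym_trop_singular A {} {}"
      unfolding sym_trop_singular_def sym_monomial_def by simp
    then have "({}::nat set) \<subseteq> {..<n} \<and> ({}::nat set) \<subseteq> {..<n} \<and> card ({}::nat set) = 0 \<and> card ({}::nat set) = 0 \<and> \<not> sym_trop_singular A {} {}"
      by simp
    then have "0 \<in> ?S" by (intro CollectI exI[of _ "{}"])
    then have "Max ?S \<in> ?S" by (intro Max_in[OF fin]) blast
    then obtain I J where IJ: "I \<subseteq> {..<n}" "J \<subseteq> {..<n}" "card I = Max ?S" "card J = Max ?S"
      "\<not> sym_trop_singular A I J" by blast
    have "trop_singular A I J"
      using rank_sing[OF assms(2) IJ(1,2)] IJ(3,4) \<open>sym_trop_rank n A > 2\<close> r by simp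
    then obtain f g i where fg: "is_min_bij A I J f" "is_min_bij A I J g" "i \<in> I" "f i \<noteq> g i"
      unfolding trop_singular_def by blast
    have finI: "finite I" using IJ(1) finite_subset by blast
    show "\<exists>I. I \<subseteq> {..<n} \<and> card I = 3 \<and> \<not> sym_trop_singular A I I"
      by (rule core[OF finI IJ(1,2) IJ(5) _ fg]) (rule rank_sing[OF assms(2)], auto)
  next
    assume "\<exists>I. I \<subseteq> {..<n} \<and> card I = 3 \<and> \<not> sym_trop_singular A I I"
    then have "3 \<in> ?S" by blast
    then have "3 \<le> Max ?S" using fin by simp
    then show "sym_trop_rank n A > 2" using r by simp
  qed
qed

end
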